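(* For odd integers $r,t\ge1$, in $S_{\mathrm{alg}}$, $$(r-1)!\,h[-r]h[-1]^t\mathbf 1=\sum_{n\ge0}\sum_{k\ge0}\binom{t}{2k}\frac{n!\,S_r^{(n+1)}(2k)!}{k!\,(-24)^k}\,h(-n-1)h(-1)^{t-2k}\mathbf 1-\sum_{k\ge0}\binom{t}{2k+1}\frac{B_{r+1}(2k+1)!}{k!\,(r+1)(-24)^k}\,h(-1)^{t-2k-1}\mathbf 1,$$ where $S_r^{(n+1)}=\frac1{n!}\sum_{j\ge0}\binom nj(-1)^{n+j}(j+1)^{r-1}$.
   Context: $S_{\mathrm{alg}}=\mathbb{Q}[h(-1),h(-2),\dots]$ is the rank-one Heisenberg VOA with vacuum $\mathbf 1=1$; $h(n)$ for $n<0$ is multiplication by $h(n)$, $h(0)=0$, and $h(n)=n\,\partial/\partial h(-n)$ for $n>0$. With $h(z)=\sum_n h(n)z^{-n-1}$, the square-bracket modes are $h[n]=\mathrm{Res}_z\,h(e^z-1)e^zz^n=\mathrm{Res}_w\,h(w)(\log(1+w))^n$, i.e. $h[n]=\sum_m\mathrm{Coeff}_{w^m}\big((\log(1+w))^n\big)h(m)$. $B_k$ are the Bernoulli numbers ($B_2=1/6$, $B_4=-1/30$). *)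

theory Defs
  imports "HOL-Library.Poly_Mapping" "HOL-Computational_Algebra.Formal_Laurent_Series"
begin

text \<open>The rank-one Heisenberg VOA S_alg = Q[h(-1),h(-2),...], modelled as the polynomial
  ring over Q in the variables x_1, x_2, ...: a polynomial is a finitely supported map from
  monomials (finitely supported exponent vectors nat =>0 nat) to rational coefficients.
  The variable with index n (n >= 1) represents h(-n). The vacuum is the polynomial 1.\<close>

type_synonym salg = "(nat \<Rightarrow>\<^sub>0 nat) \<Rightarrow>\<^sub>0 rat"

definition sconst :: "rat \<Rightarrow> salg" where
  "sconst c = Poly_Mapping.single 0 c"

definition hvar :: "nat \<Rightarrow> salg" where
  "hvar n = Poly_Mapping.single (Poly_Mapping.single n 1) 1"

definition pdiff :: "nat \<Rightarrow> salg \<Rightarrow> salg" where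
  "pdiff i p = Abs_poly_mapping (\<lambda>m::nat \<Rightarrow>\<^sub>0 nat. of_nat (Poly_Mapping.lookup m i + 1) * Poly_Mapping.lookup p (m + Poly_Mapping.single i (1::nat)))"

lemma lookup_pdiff:
  "Poly_Mapping.lookup (pdiff i p) m = of_nat (Poly_Mapping.lookup m i + 1) * Poly_Mapping.lookup p (m + Poly_Mapping.single i (1::nat))"
proof -
  have "{m::nat \<Rightarrow>\<^sub>0 nat. of_nat (Poly_Mapping.lookup m i + 1) * Poly_Mapping.lookup p (m + Poly_Mapping.single i (1::nat)) \<noteq> (0::rat)}
        \<subseteq> (\<lambda>m. m - Poly_Mapping.single i 1) ` Poly_Mapping.keys p"
  proof
    fix m assume "m \<in> {m::nat \<Rightarrow>\<^sub>0 nat. of_nat (Poly_Mapping.lookup m i + 1) * Poly_Mapping.lookup p (m + Poly_Mapping.single i (1::nat)) \<noteq> (0::rat)}"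
    hence "m + Poly_Mapping.single i 1 \<in> Poly_Mapping.keys p" by (auto intro: lookup_not_eq_zero_eq_in_keys[THEN iffD1])
    moreover have "m = (m + Poly_Mapping.single i 1) - Poly_Mapping.single i 1" by simp
    ultimately show "m \<in> (\<lambda>m. m - Poly_Mapping.single i 1) ` Poly_Mapping.keys p" by blast
  qed
  hence "finite {m::nat \<Rightarrow>\<^sub>0 nat. of_nat (Poly_Mapping.lookup m i + 1) * Poly_Mapping.lookup p (m + Poly_Mapping.single i (1::nat)) \<noteq> (0::rat)}"
    by (rule finite_subset) simp
  thus ?thesis unfolding pdiff_def by (simp add: Abs_poly_mapping_inverse)
qed

definition hmode :: "int \<Rightarrow> salg \<Rightarrow> salg" where
  "hmode n v = (if n < 0 then hvar (nat (- n)) * v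
                else if n = 0 then 0
                else sconst (of_int n) * pdiff (nat n) v)"

definition logL :: "rat fls" where
  "logL = fps_to_fls (fps_ln 1)"

text \<open>The sum is over all integers m; only finitely many summands are nonzero
  (the coefficients vanish for m < n, and h(m) v = 0 for m large), so we sum
  over the (finite) set of indices with nonzero summand.\<close>
definition hsq :: "int \<Rightarrow> salg \<Rightarrow> salg" where
  "hsq n v = (\<Sum>m\<in>{m. fls_nth (logL powi n) m \<noteq> 0 \<and> hmode m v \<noteq> 0}.
                 sconst (fls_nth (logL powi n) m) * hmode m v)"

text \<open>Bernoulli numbers via the generating function x/(e^x - 1) (so B_1 = -1/2,
  B_2 = 1/6, B_4 = -1/30).\<close>
definition bernoulli :: "nat \<Rightarrow> rat" where
  "bernoulli k = fact k * fps_nth (fps_X / (fps_exp 1 - 1)) k"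

text \<open>S_r^{(n+1)} = 1/n! * sum_{j>=0} binom(n,j) (-1)^(n+j) (j+1)^(r-1);
  the binomial vanishes for j > n.\<close>
definition Scoef :: "nat \<Rightarrow> nat \<Rightarrow> rat" where
  "Scoef r n = (1 / fact n) * (\<Sum>j\<le>n. of_nat (n choose j) * (-1) ^ (n + j) * of_nat (j + 1) ^ (r - 1))"

end

theory Submission
  imports Defs
begin


definition ee :: "rat fps" where "ee = Abs_fps (\<lambda>n. 1 / fact (Suc n))"
definition EE :: "rat fps" where "EE = fps_exp 1 - 1"
definition uu :: "rat fps" where "uu = Abs_fps (\<lambda>n. (-1)^n / of_nat (Suc n))"

lemma EE_eq: "EE = fps_X * ee"
  by (rule fps_ext) (auto simp: EE_def ee_def fps_X_mult_nth fact_reduce)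

lemma ln_eq: "fps_ln (1::rat) = fps_X * uu"
  by (rule fps_ext) (auto simp: uu_def fps_X_mult_nth fps_ln_nth)

lemma ee0 [simp]: "ee $ 0 = 1" by (simp add: ee_def)
lemma uu0 [simp]: "uu $ 0 = 1" by (simp add: uu_def)
lemma EE0 [simp]: "EE $ 0 = 0" by (simp add: EE_def)

lemma ln_EE: "fps_ln (1::rat) oo EE = fps_X"
  unfolding EE_def fps_ln_fps_exp_inv[of "1::rat", simplified]
  by (rule fps_inv_fps_exp_compose) simp

lemma uu_EE: "uu oo EE = inverse ee"
proof -
  have "EE * (uu oo EE) = fps_X"
    using ln_EE unfolding ln_eq
    by (simp add: fps_compose_mult_distrib)
  hence "fps_X * (ee * (uu oo EE)) = fps_X * 1"
    by (simp add: EE_eq mult.assoc)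
  hence "ee * (uu oo EE) = 1" by (simp add: fps_X_neq_zero)
  thus ?thesis using fps_inverse_unique by (metis mult.commute)
qed

lemma inv_ee: "inverse ee * ee = 1"
  by (simp add: inverse_mult_eq_1)

lemma ee_pow_inv: "ee ^ n * inverse ee ^ n = 1"
  by (metis inv_ee mult.commute power_mult_distrib power_one)

lemma ee_nz: "ee \<noteq> 0"
proof
  assume "ee = 0" hence "ee $ 0 = 0" by simp
  thus False by simp
qed

lemma dEE: "fps_deriv EE = fps_X * fps_deriv ee + ee"
  by (simp add: EE_eq)

lemma K_lemma: "(inverse ee ^ Suc m * fps_deriv EE) $ m = (if m = 0 then 1 else 0)"
proof (cases "m = 0")
  case True
  thus ?thesis by (simp add: EE_def)
next
  case False
  define g where "g = inverse ee"
  have gee: "g * ee = 1" using inv_ee g_def by simp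
  have dg: "fps_deriv g = - fps_deriv ee * g^2" unfolding g_def
    by (rule fps_inverse_deriv) simp
  have dgm: "fps_deriv (g ^ m) = - of_nat m * (fps_deriv ee * g ^ Suc m)"
  proof -
    have "fps_deriv (g ^ m) = of_nat m * fps_deriv g * g ^ (m - 1)"
      by (rule fps_deriv_power')
    also have "\<dots> = - of_nat m * (fps_deriv ee * (g^2 * g ^ (m - 1)))"
      by (simp add: dg)
    also have "g^2 * g ^ (m - 1) = g ^ Suc m"
      using False by (simp add: power_add[symmetric]) 
    finally show ?thesis .
  qed
  have "g ^ Suc m * fps_deriv EE = fps_X * (fps_deriv ee * g ^ Suc m) + g ^ m"
  proof -
    have "g ^ Suc m * ee = g ^ m" 
      using gee by (simp add: mult.assoc mult.commute[of g ee])
    thus ?thesis by (simp add: dEE algebra_simps)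
  qed
  hence "(g ^ Suc m * fps_deriv EE) $ m = (fps_deriv ee * g ^ Suc m) $ (m - 1) + (g ^ m) $ m"
    using False by simp
  moreover have "(fps_deriv (g ^ m)) $ (m - 1) = of_nat m * (g ^ m) $ m"
    using False by simp
  moreover have "(fps_deriv (g ^ m)) $ (m - 1) = - of_nat m * (fps_deriv ee * g ^ Suc m) $ (m - 1)"
    unfolding dgm by (simp add: fps_mult_left_const_nth flip: fps_of_nat)
  ultimately have "of_nat m * ((g ^ Suc m * fps_deriv EE) $ m) = 0"
    by (simp add: algebra_simps)
  hence "(g ^ Suc m * fps_deriv EE) $ m = 0" using False by simp
  thus ?thesis using False g_def by simp
qed

lemma EE_pow_H: 
  assumes "j \<le> k"
  shows "(EE ^ j * (inverse ee ^ Suc k * fps_deriv EE)) $ k = (if j = k then 1 else 0)"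
proof -
  have eq1: "ee ^ j * inverse ee ^ Suc k = inverse ee ^ Suc (k - j)"
  proof -
    have "inverse ee ^ Suc k = inverse ee ^ j * inverse ee ^ Suc (k - j)"
      using assms by (simp add: power_add[symmetric])
    moreover have "ee ^ j * inverse ee ^ j = 1"
      by (simp add: power_mult_distrib[symmetric] mult.commute[of ee] inv_ee)
    ultimately show ?thesis by (simp add: mult.assoc[symmetric])
  qed
  have "EE ^ j * (inverse ee ^ Suc k * fps_deriv EE) = fps_X ^ j * ((ee ^ j * inverse ee ^ Suc k) * fps_deriv EE)"
    by (simp only: EE_eq power_mult_distrib mult.assoc)
  also have "\<dots> = fps_X ^ j * (inverse ee ^ Suc (k - j) * fps_deriv EE)"
    by (simp only: eq1)
  finally have "EE ^ j * (inverse ee ^ Suc k * fps_deriv EE) = fps_X ^ j * (inverse ee ^ Suc (k - j) * fps_deriv EE)" .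
  hence "(EE ^ j * (inverse ee ^ Suc k * fps_deriv EE)) $ k = (fps_X ^ j * (inverse ee ^ Suc (k - j) * fps_deriv EE)) $ k"
    by (simp only:)
  also have "\<dots> = (inverse ee ^ Suc (k - j) * fps_deriv EE) $ (k - j)"
    by (subst fps_X_power_mult_nth) (use assms in auto)
  also have "\<dots> = (if j = k then 1 else 0)" unfolding K_lemma using assms by auto
  finally show ?thesis .
qed

lemma lagrange: "F $ k = ((F oo EE) * (inverse ee ^ Suc k * fps_deriv EE)) $ k"
proof -
  define H where "H = inverse ee ^ Suc k * fps_deriv EE"
  have "((F oo EE) * H) $ k = (\<Sum>i=0..k. (\<Sum>j=0..i. F$j * (EE^j $ i)) * H $ (k - i))"
    by (simp add: fps_mult_nth fps_compose_nth)
  also have "\<dots> = (\<Sum>i=0..k. (\<Sum>j=0..k. F$j * (EE^j $ i)) * H $ (k - i))"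
  proof (rule sum.cong[OF refl])
    fix i assume "i \<in> {0..k}"
    have "(\<Sum>j=0..k. F$j * (EE^j $ i)) = (\<Sum>j=0..i. F$j * (EE^j $ i))"
      by (rule sum.mono_neutral_right) (use \<open>i \<in> {0..k}\<close> startsby_zero_power_prefix[OF EE0] in auto)
    thus "(\<Sum>j=0..i. F$j * (EE^j $ i)) * H $ (k - i) = (\<Sum>j=0..k. F$j * (EE^j $ i)) * H $ (k - i)" by simp
  qed
  also have "\<dots> = (\<Sum>i=0..k. \<Sum>j=0..k. F$j * (EE^j $ i * H $ (k - i)))"
    by (simp add: sum_distrib_right mult.assoc)
  also have "\<dots> = (\<Sum>j=0..k. \<Sum>i=0..k. F$j * (EE^j $ i * H $ (k - i)))"
    by (rule sum.swap)
  also have "\<dots> = (\<Sum>j=0..k. F$j * (\<Sum>i=0..k. EE^j $ i * H $ (k - i)))"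
    by (simp add: sum_distrib_left)
  also have "\<dots> = (\<Sum>j=0..k. F$j * (EE^j * H) $ k)"
    by (simp add: fps_mult_nth)
  also have "\<dots> = (\<Sum>j=0..k. F$j * (if j = k then 1 else 0))"
  proof (rule sum.cong[OF refl])
    fix j assume j: "j \<in> {0..k}"
    have "(EE^j * H) $ k = (if j = k then 1 else 0)" unfolding H_def
      by (rule EE_pow_H) (use j in auto)
    thus "F$j * (EE^j * H) $ k = F$j * (if j = k then 1 else 0)" by (simp only:)
  qed
  also have "\<dots> = (\<Sum>j = 0..k. if j = k then F $ j else 0)" by (rule sum.cong) auto
  also have "\<dots> = F $ k" by simp
  finally show ?thesis by (simp add: H_def)
qed

definition PP :: "nat \<Rightarrow> rat fps" where "PP r = inverse uu ^ r"

lemma dEE_exp: "fps_deriv EE = fps_exp 1"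
  by (simp add: EE_def)

lemma PP_EE: "PP r oo EE = ee ^ r"
proof -
  have "inverse uu oo EE = inverse (uu oo EE)"
    by (rule fps_inverse_compose) simp_all
  also have "\<dots> = ee" by (simp add: uu_EE)
  finally show ?thesis unfolding PP_def by (simp add: fps_compose_power[symmetric])
qed

lemma PP_coeffA:
  assumes "n < r"
  shows "PP r $ (r - 1 - n) = (EE ^ n * fps_exp 1) $ (r - 1)"
proof -
  define k where "k = r - 1 - n"
  have r: "r = n + Suc k" using assms k_def by simp
  have "PP r $ k = (ee ^ r * (inverse ee ^ Suc k * fps_deriv EE)) $ k"
    using lagrange[of "PP r" k] by (simp only: PP_EE)
  also have "ee ^ r * (inverse ee ^ Suc k * fps_deriv EE) = ee ^ n * fps_deriv EE"
  proof -
    have one: "ee ^ Suc k * inverse ee ^ Suc k = 1"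
      by (rule ee_pow_inv)
    have eq: "ee ^ r * (inverse ee ^ Suc k * fps_deriv EE) = ee ^ n * ((ee ^ Suc k * inverse ee ^ Suc k) * fps_deriv EE)"
      by (simp only: r power_add mult.assoc)
    show ?thesis unfolding eq one by simp
  qed
  also have "(ee ^ n * fps_deriv EE) $ k = (fps_X ^ n * (ee ^ n * fps_deriv EE)) $ (r - 1)"
    by (subst fps_X_power_mult_nth) (use r in auto)
  also have "fps_X ^ n * (ee ^ n * fps_deriv EE) = EE ^ n * fps_exp 1"
    unfolding dEE_exp by (simp only: EE_eq power_mult_distrib mult.assoc)
  finally show ?thesis by (simp add: k_def)
qed

lemma beta_ident: "inverse ee ^ 2 * fps_deriv EE = inverse ee - fps_X * fps_deriv (inverse ee)"
proof -
  have d: "fps_deriv (inverse ee) = - fps_deriv ee * (inverse ee)^2"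
    by (rule fps_inverse_deriv) simp
  have "inverse ee ^ 2 * ee = inverse ee"
    using inv_ee by (simp add: power2_eq_square mult.assoc)
  thus ?thesis by (simp add: dEE d algebra_simps)
qed

lemma PP_coeffB: "PP r $ Suc r = - of_nat r * (inverse ee) $ Suc r"
proof -
  have "PP r $ Suc r = (ee ^ r * (inverse ee ^ Suc (Suc r) * fps_deriv EE)) $ Suc r"
    using lagrange[of "PP r" "Suc r"] by (simp only: PP_EE)
  also have "ee ^ r * (inverse ee ^ Suc (Suc r) * fps_deriv EE) = inverse ee ^ 2 * fps_deriv EE"
  proof -
    have "ee ^ r * inverse ee ^ r = 1"
      by (simp add: power_mult_distrib[symmetric] mult.commute[of ee] inv_ee)
    moreover have "inverse ee ^ Suc (Suc r) = inverse ee ^ r * inverse ee ^ 2"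
      by (simp add: power_add[symmetric])
    ultimately show ?thesis by (simp only: mult.assoc[symmetric]) simp
  qed
  also have "(inverse ee ^ 2 * fps_deriv EE) $ Suc r = (inverse ee) $ Suc r - of_nat (Suc r) * (inverse ee) $ Suc r"
    unfolding beta_ident by simp
  finally show ?thesis by (simp add: algebra_simps)
qed

lemma X_div_EE: "fps_X / (fps_exp 1 - 1) = inverse ee"
proof -
  have "fps_X = EE * inverse ee" using inv_ee by (simp add: EE_eq mult.assoc mult.commute[of "inverse ee"])
  moreover have "EE \<noteq> 0" by (simp add: EE_eq fps_X_neq_zero ee_nz)
  ultimately show ?thesis unfolding EE_def[symmetric]
    using ee_nz by (metis nonzero_mult_div_cancel_left)
qed

lemma bernoulli_eq: "bernoulli k = fact k * (inverse ee) $ k"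
  by (simp add: bernoulli_def X_div_EE)

lemma PP_coeffB': 
  assumes "r \<ge> 1"
  shows "fact (r - 1) * PP r $ Suc r = - bernoulli (Suc r) / of_nat (Suc r)"
proof -
  have f: "fact (Suc r) = of_nat (Suc r) * (of_nat r * (fact (r - 1) :: rat))"
    using assms by (cases r) (simp_all add: algebra_simps)
  show ?thesis unfolding PP_coeffB bernoulli_eq f by (simp add: field_simps)
qed


lemma exp_term_nth:
  "(of_nat c * fps_exp (1::rat) ^ j * (-1) ^ m * fps_exp 1) $ i = of_nat c * (-1)^m * of_nat (Suc j) ^ i / fact i"
proof -
  have m1: "(-1::rat fps) ^ m = fps_const ((-1)^m)"
  proof -
    have "(-1::rat fps) = fps_const (-1)" by simp
    hence "(-1::rat fps) ^ m = fps_const (-1) ^ m" by (simp only:)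
    thus ?thesis by (simp only: fps_const_power)
  qed
  have ex: "fps_exp (1::rat) ^ j * fps_exp 1 = fps_exp (of_nat (Suc j))"
    by (simp add: fps_exp_power_mult fps_exp_add_mult[symmetric] algebra_simps)
  have "of_nat c * fps_exp (1::rat) ^ j * (-1) ^ m * fps_exp 1 = fps_const (of_nat c) * (fps_const ((-1)^m) * (fps_exp (1::rat) ^ j * fps_exp 1))"
    by (simp only: m1 fps_of_nat[symmetric] ac_simps)
  also have "\<dots> = fps_const (of_nat c) * (fps_const ((-1)^m) * fps_exp (of_nat (Suc j)))"
    by (simp only: ex)
  finally show ?thesis by (simp add: fps_mult_left_const_nth)
qed

lemma Scoef_eq:
  assumes "r \<ge> 1"
  shows "fact n * Scoef r n = fact (r - 1) * (EE ^ n * fps_exp 1) $ (r - 1)"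
proof -
  have "EE ^ n * fps_exp 1 = (\<Sum>j\<le>n. of_nat (n choose j) * fps_exp 1 ^ j * (-1) ^ (n - j) * fps_exp (1::rat))"
    unfolding EE_def using binomial_ring[of "fps_exp (1::rat)" "-1" n]
    by (simp add: sum_distrib_right)
  hence "(EE ^ n * fps_exp 1) $ (r - 1) = (\<Sum>j\<le>n. of_nat (n choose j) * (-1) ^ (n - j) * of_nat (Suc j) ^ (r - 1) / fact (r - 1))"
    by (simp add: fps_sum_nth exp_term_nth)
  hence "fact (r - 1) * (EE ^ n * fps_exp 1) $ (r - 1) = (\<Sum>j\<le>n. of_nat (n choose j) * (-1) ^ (n - j) * of_nat (Suc j) ^ (r - 1))"
    by (simp add: sum_distrib_left)
  also have "\<dots> = (\<Sum>j\<le>n. of_nat (n choose j) * (-1) ^ (n + j) * of_nat (j + 1) ^ (r - 1))"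
  proof (rule sum.cong[OF refl])
    fix j assume "j \<in> {..n}"
    hence "n + j = (n - j) + 2 * j" by simp
    hence "(-1::rat) ^ (n + j) = (-1) ^ (n - j) * ((-1)^2)^j" by (simp only: power_add power_mult)
    hence "(-1::rat) ^ (n + j) = (-1) ^ (n - j)" by simp
    thus "of_nat (n choose j) * (-1) ^ (n - j) * of_nat (Suc j) ^ (r - 1) = of_nat (n choose j) * (-1::rat) ^ (n + j) * of_nat (j + 1) ^ (r - 1)"
      by simp
  qed
  also have "\<dots> = fact n * Scoef r n" by (simp add: Scoef_def)
  finally show ?thesis ..
qed

lemma EE_exp_zero: 
  assumes "r \<le> n" "r \<ge> 1" shows "(EE ^ n * fps_exp 1) $ (r - 1) = 0"
proof -
  have e1: "EE ^ n * fps_exp 1 = fps_X ^ n * (ee ^ n * fps_exp 1)"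
    by (simp only: EE_eq power_mult_distrib mult.assoc)
  have e2: "(fps_X ^ n * (ee ^ n * fps_exp (1::rat))) $ (r - 1) = 0"
    by (subst fps_X_power_mult_nth) (use assms in auto)
  show ?thesis unfolding e1 by (rule e2)
qed

lemma Scoef_zero: "r \<le> n \<Longrightarrow> r \<ge> 1 \<Longrightarrow> Scoef r n = 0"
proof -
  assume a: "r \<le> n" "r \<ge> 1"
  have "fact n * Scoef r n = 0" using Scoef_eq[of r n] EE_exp_zero[OF a] a by simp
  thus ?thesis by simp
qed



lemma logL_powi: "logL powi (- int r) = fls_shift (int r) (fps_to_fls (PP r))"
proof -
  have u1: "uu ^ r * inverse uu ^ r = 1"
    by (metis inverse_mult_eq_1 uu0 mult.commute power_mult_distrib power_one zero_neq_one)
  have "(fps_X * uu) ^ r * PP r = fps_X ^ r"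
    unfolding PP_def by (simp only: power_mult_distrib mult.assoc u1 mult_1_right)
  hence "logL ^ r * fls_shift (int r) (fps_to_fls (PP r)) = fls_shift (int r) (fps_to_fls (fps_X ^ r))"
    unfolding logL_def ln_eq
    by (simp only: fps_to_fls_power[symmetric] fls_shifted_times_simps(1) fls_times_fps_to_fls[symmetric])
  also have "\<dots> = 1"
    by (simp add: fps_to_fls_power fls_X_power_conv_shift_1)
  finally have "logL ^ r * fls_shift (int r) (fps_to_fls (PP r)) = 1" .
  hence "inverse (logL ^ r) = fls_shift (int r) (fps_to_fls (PP r))"
    by (rule inverse_unique)
  thus ?thesis by (simp add: power_int_minus)
qed

definition cm :: "nat \<Rightarrow> int \<Rightarrow> rat" where
  "cm r m = fls_nth (logL powi (- int r)) m"

lemma cm_eq: "cm r m = (if m + int r < 0 then 0 else PP r $ nat (m + int r))"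
  by (simp add: cm_def logL_powi)

lemma cm_low: "m < - int r \<Longrightarrow> cm r m = 0"
  by (simp add: cm_eq)

lemma cm_neg: "n < r \<Longrightarrow> cm r (- int (Suc n)) = PP r $ (r - 1 - n)"
proof -
  assume a: "n < r"
  have "nat (- int (Suc n) + int r) = r - 1 - n" by (subst nat_eq_iff) (use a in auto)
  moreover have "\<not> (- int (Suc n) + int r < 0)" using a by simp
  ultimately show ?thesis unfolding cm_eq by presburger
qed

lemma cm_one: "cm r 1 = PP r $ Suc r"
  by (simp add: cm_eq nat_add_distrib)

lemma inv_ee_coeffs: "inverse ee $ 1 = - 1/2" "inverse ee $ 2 = 1/12"
proof -
  have e1: "ee $ 1 = 1/2" "ee $ 2 = 1/6" "ee $ Suc 0 = 1/2" by (simp_all add: ee_def)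
  have i0: "inverse ee $ 0 = 1" by simp
  have "(inverse ee * ee) $ 1 = 0" by (simp add: inv_ee)
  hence a: "inverse ee $ 1 = -1/2" by (simp add: fps_mult_nth e1)
  show "inverse ee $ 1 = - 1/2" by (rule a)
  have "(inverse ee * ee) $ 2 = 0" by (simp add: inv_ee)
  hence "inverse ee $ 0 * ee $ 2 + inverse ee $ 1 * ee $ 1 + inverse ee $ 2 * ee $ 0 = 0"
    by (simp add: fps_mult_nth numeral_2_eq_2)
  thus "inverse ee $ 2 = 1/12" using a by (simp add: e1 i0)
qed

lemma cm1_vals: "cm 1 (-1) = 1" "cm 1 1 = - 1/12"
proof -
  show "cm 1 (-1) = 1" by (simp add: cm_eq PP_def)
  have "cm 1 1 = PP 1 $ Suc 1" by (rule cm_one)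
  also have "\<dots> = - of_nat 1 * (inverse ee) $ Suc 1" by (rule PP_coeffB)
  also have "\<dots> = - 1/12" using inv_ee_coeffs(2) by (simp add: numeral_2_eq_2)
  finally show "cm 1 1 = - 1/12" .
qed



definition mon :: "nat \<Rightarrow> rat \<Rightarrow> salg" where
  "mon a c = Poly_Mapping.single (Poly_Mapping.single 1 a) c"

lemma mon_add: "mon a (x + y) = mon a x + mon a y"
  by (simp add: mon_def single_add)

lemma mon_zero [simp]: "mon a 0 = 0"
  by (simp add: mon_def)

lemma sconst_mult_single: "sconst c * Poly_Mapping.single M d = Poly_Mapping.single M (c * d)"
  by (simp add: sconst_def mult_single)

lemma sconst_mon: "sconst c * mon a d = mon a (c * d)"
  by (simp add: mon_def sconst_mult_single)

lemma sconst_one [simp]: "sconst 1 = 1"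
  by (simp add: sconst_def)

lemma sconst_zero [simp]: "sconst 0 = 0"
  by (simp add: sconst_def)

lemma sconst_mult: "sconst (a * b) = sconst a * sconst b"
  by (simp add: sconst_def mult_single)

lemma hvar_mult_single: "hvar j * Poly_Mapping.single M d = Poly_Mapping.single (Poly_Mapping.single j 1 + M) d"
  by (simp add: hvar_def mult_single)

lemma hvar1_mon: "hvar 1 * mon a c = mon (Suc a) c"
  by (simp add: mon_def hvar_mult_single single_add[symmetric])

lemma hvar1_pow: "hvar 1 ^ a = mon a 1"
proof (induction a)
  case 0 thus ?case by (simp add: mon_def)
next
  case (Suc a) thus ?case by (simp only: power_Suc Suc.IH hvar1_mon)
qed

lemma pdiff_add: "pdiff i (p + q) = pdiff i p + pdiff i q"
  by (rule poly_mapping_eqI) (simp add: lookup_pdiff lookup_add algebra_simps)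

lemma pdiff_zero [simp]: "pdiff i 0 = 0"
  by (rule poly_mapping_eqI) (simp add: lookup_pdiff)

lemma pdiff_sum: "pdiff i (sum f S) = (\<Sum>x\<in>S. pdiff i (f x))"
  by (induction S rule: infinite_finite_induct) (simp_all add: pdiff_add)

lemma pdiff_mon_other:
  assumes "i \<noteq> 1" shows "pdiff i (mon a c) = 0"
proof (rule poly_mapping_eqI)
  fix m
  have "Poly_Mapping.single 1 a \<noteq> m + Poly_Mapping.single i 1"
  proof
    assume "Poly_Mapping.single 1 a = m + Poly_Mapping.single i 1"
    hence "Poly_Mapping.lookup (Poly_Mapping.single 1 a) i = Poly_Mapping.lookup (m + Poly_Mapping.single i 1) i" by simp
    thus False using assms by (simp add: lookup_add lookup_single)
  qed
  thus "Poly_Mapping.lookup (pdiff i (mon a c)) m = Poly_Mapping.lookup 0 m"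
    by (simp add: lookup_pdiff mon_def lookup_single)
qed

lemma pdiff_mon1: "pdiff 1 (mon a c) = mon (a - 1) (of_nat a * c)"
proof (rule poly_mapping_eqI)
  fix m
  show "Poly_Mapping.lookup (pdiff 1 (mon a c)) m = Poly_Mapping.lookup (mon (a - 1) (of_nat a * c)) m"
  proof (cases "a = 0")
    case True
    have "Poly_Mapping.single 1 a \<noteq> m + Poly_Mapping.single 1 1"
    proof
      assume "Poly_Mapping.single 1 a = m + Poly_Mapping.single 1 1"
      hence "Poly_Mapping.lookup (Poly_Mapping.single (1::nat) a) 1 = Poly_Mapping.lookup (m + Poly_Mapping.single 1 1) 1"
        by (rule arg_cong[where f="\<lambda>p. Poly_Mapping.lookup p (1::nat)"])
      thus False using True by (simp add: lookup_add lookup_single)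
    qed
    thus ?thesis using True by (simp add: lookup_pdiff mon_def lookup_single)
  next
    case False
    have sa: "Poly_Mapping.single (1::nat) a = Poly_Mapping.single 1 (a - 1) + Poly_Mapping.single 1 1"
      using False by (simp add: single_add[symmetric])
    have iff: "(Poly_Mapping.single 1 a = m + Poly_Mapping.single 1 1) \<longleftrightarrow> (Poly_Mapping.single 1 (a - 1) = m)"
      unfolding sa by (auto simp: add_right_cancel)
    show ?thesis
    proof (cases "Poly_Mapping.single 1 (a - 1) = m")
      case True
      hence "Poly_Mapping.lookup m 1 + 1 = a" using False by (auto simp: lookup_single)
      thus ?thesis using True iff by (simp add: lookup_pdiff mon_def lookup_single)
    next
      case F: False
      thus ?thesis using iff by (simp add: lookup_pdiff mon_def lookup_single)
    qed
  qed
qed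



declare One_nat_def [simp del]

lemma hmode_neg: "hmode (- int (Suc n)) v = hvar (Suc n) * v"
proof -
  have "nat (- (- int (Suc n))) = Suc n" by (simp only: minus_minus nat_int)
  thus ?thesis unfolding hmode_def by simp
qed

lemma hmode_0: "hmode 0 v = 0" by (simp add: hmode_def)

lemma hmode_1: "hmode 1 v = pdiff 1 v" by (simp add: hmode_def One_nat_def)

lemma hmode_big: "m \<ge> 2 \<Longrightarrow> \<forall>i\<ge>2. pdiff i v = 0 \<Longrightarrow> hmode m v = 0"
proof -
  assume a: "m \<ge> 2" "\<forall>i\<ge>2. pdiff i v = 0"
  hence "pdiff (nat m) v = 0" by simp
  thus ?thesis using a by (simp add: hmode_def)
qed

lemma set_decomp: "{- int r..1} = insert 1 (insert 0 ((\<lambda>n. - int (Suc n)) ` {..<r}))"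
proof (intro set_eqI iffI)
  fix m assume "m \<in> {- int r..1}"
  hence m: "- int r \<le> m" "m \<le> 1" by auto
  show "m \<in> insert 1 (insert 0 ((\<lambda>n. - int (Suc n)) ` {..<r}))"
  proof (cases "m < 0")
    case True
    hence "m = - int (Suc (nat (- m - 1)))" "nat (- m - 1) < r" using m by auto
    thus ?thesis by blast
  next
    case False thus ?thesis using m by auto
  qed
qed auto

lemma hsq_DD:
  assumes "\<forall>i\<ge>2. pdiff i v = 0"
  shows "hsq (- int r) v = (\<Sum>n<r. sconst (cm r (- int (Suc n))) * (hvar (Suc n) * v)) + sconst (cm r 1) * pdiff 1 v"
proof -
  have "hsq (- int r) v = (\<Sum>m\<in>{m. cm r m \<noteq> 0 \<and> hmode m v \<noteq> 0}. sconst (cm r m) * hmode m v)"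
    by (simp add: hsq_def cm_def)
  also have "\<dots> = (\<Sum>m\<in>{- int r..1}. sconst (cm r m) * hmode m v)"
  proof (rule sum.mono_neutral_left)
    show "finite {- int r..1}" by simp
    show "{m. cm r m \<noteq> 0 \<and> hmode m v \<noteq> 0} \<subseteq> {- int r..1}"
    proof
      fix m assume "m \<in> {m. cm r m \<noteq> 0 \<and> hmode m v \<noteq> 0}"
      hence "cm r m \<noteq> 0" "hmode m v \<noteq> 0" by auto
      hence "\<not> m < - int r" "\<not> m \<ge> 2" using cm_low hmode_big assms by blast+
      thus "m \<in> {- int r..1}" by auto
    qed
    show "\<forall>m\<in>{- int r..1} - {m. cm r m \<noteq> 0 \<and> hmode m v \<noteq> 0}. sconst (cm r m) * hmode m v = 0"
      by auto
  qed
  also have "\<dots> = sconst (cm r 1) * hmode 1 v + (sconst (cm r 0) * hmode 0 v +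
        (\<Sum>m\<in>(\<lambda>n. - int (Suc n)) ` {..<r}. sconst (cm r m) * hmode m v))"
    unfolding set_decomp by (subst sum.insert; auto)+
  also have "(\<Sum>m\<in>(\<lambda>n. - int (Suc n)) ` {..<r}. sconst (cm r m) * hmode m v)
      = (\<Sum>n<r. sconst (cm r (- int (Suc n))) * hmode (- int (Suc n)) v)"
    by (subst sum.reindex) (auto simp: inj_on_def)
  also have "\<dots> = (\<Sum>n<r. sconst (cm r (- int (Suc n))) * (hvar (Suc n) * v))"
    by (simp only: hmode_neg)
  finally show ?thesis by (simp add: hmode_0 hmode_1)
qed

definition gam :: "nat \<Rightarrow> nat \<Rightarrow> rat" where
  "gam t k = of_nat (t choose (2*k)) * fact (2*k) / (fact k * (-24) ^ k)"

definition SS :: "nat \<Rightarrow> salg" where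
  "SS t = (\<Sum>k\<le>t. mon (t - 2*k) (gam t k))"

lemma gam_0 [simp]: "gam t 0 = 1" by (simp add: gam_def)

lemma gam_big: "t < 2*k \<Longrightarrow> gam t k = 0" by (simp add: gam_def)

lemma choose_shift: "(t choose Suc j) * Suc j = (t choose j) * (t - j)"
  using binomial_absorption[of j t] binomial_absorb_comp[of t j] by (simp add: mult.commute)

lemma choose_shift_rat: "(of_nat (t choose Suc j) :: rat) * of_nat (Suc j) = of_nat (t choose j) * of_nat (t - j)"
  using arg_cong[OF choose_shift[of t j], of "of_nat :: nat \<Rightarrow> rat"] by (simp only: of_nat_mult)

lemma gam_aux:
  fixes D E C K F P :: rat
  assumes "K \<noteq> 0" "F \<noteq> 0" "P \<noteq> 0"
  shows "D * E * C * (2 * K) / (K * F * ((-24) * P)) = (- 1/12) * E * (D * C / (F * P))"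
  using assms by (simp add: field_simps)

lemma gam_rec: "gam (Suc t) (Suc k) = gam t (Suc k) + (- 1/12) * of_nat (t - 2*k) * gam t k"
proof -
  have c: "(of_nat (t choose Suc (2*k)) :: rat) * of_nat (Suc (2*k)) = of_nat (t choose (2*k)) * of_nat (t - 2*k)"
    by (rule choose_shift_rat)
  have f1: "fact (2 * Suc k) = (of_nat (Suc (Suc (2*k))) * of_nat (Suc (2*k)) * fact (2*k) :: rat)"
    by (simp add: algebra_simps)
  have f2: "fact (Suc k) = (of_nat (Suc k) * fact k :: rat)" by simp
  have "gam (Suc t) (Suc k) - gam t (Suc k) = of_nat (t choose Suc (2*k)) * fact (2 * Suc k) / (fact (Suc k) * (-24) ^ Suc k)"
    by (simp add: gam_def diff_divide_distrib[symmetric] algebra_simps)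
  also have "\<dots> = (of_nat (t choose Suc (2*k)) * of_nat (Suc (2*k))) * fact (2*k) * (2 * of_nat (Suc k)) / (of_nat (Suc k) * fact k * (-24) ^ Suc k)"
    unfolding f1 f2 by (simp add: algebra_simps)
  also have "\<dots> = (of_nat (t choose (2*k)) * of_nat (t - 2*k)) * fact (2*k) * (2 * of_nat (Suc k)) / (of_nat (Suc k) * fact k * ((-24) * (-24) ^ k))"
    by (simp only: c power_Suc)
  also have "\<dots> = (- 1/12) * of_nat (t - 2*k) * (of_nat (t choose (2*k)) * fact (2*k) / (fact k * (-24) ^ k))"
    by (rule gam_aux) auto
  also have "\<dots> = (- 1/12) * of_nat (t - 2*k) * gam t k"
    by (simp only: gam_def)
  finally show ?thesis by (simp add: diff_eq_eq add.commute)
qed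

lemma pdiff_SS: "i \<noteq> 1 \<Longrightarrow> pdiff i (SS t) = 0"
  by (simp add: SS_def pdiff_sum pdiff_mon_other)

lemma pdiff1_SS: "pdiff 1 (SS t) = (\<Sum>k\<le>t. mon (t - Suc (2*k)) (of_nat (t - 2*k) * gam t k))"
  by (simp add: SS_def pdiff_sum pdiff_mon1 Suc_eq_plus1)

lemma hvar1_SS: "hvar 1 * SS t = (\<Sum>k\<le>t. mon (Suc (t - 2*k)) (gam t k))"
  by (simp add: SS_def sum_distrib_left hvar1_mon)

lemma hermite: "hsq (-1) (SS t) = SS (Suc t)"
proof -
  have pd: "\<forall>i\<ge>2. pdiff i (SS t) = 0" by (simp add: pdiff_SS)
  have s1: "(\<Sum>n<(1::nat). sconst (cm 1 (- int (Suc n))) * (hvar (Suc n) * SS t)) = sconst (cm 1 (-1)) * (hvar 1 * SS t)"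
    by (simp add: One_nat_def)
  have "hsq (- int 1) (SS t) = sconst (cm 1 (-1)) * (hvar 1 * SS t) + sconst (cm 1 1) * pdiff 1 (SS t)"
    using hsq_DD[OF pd, of 1] unfolding s1 .
  hence h: "hsq (-1) (SS t) = hvar 1 * SS t + sconst (- 1/12) * pdiff 1 (SS t)"
    by (simp add: cm1_vals)
  have A: "hvar 1 * SS t = mon (Suc t) 1 + (\<Sum>k\<le>t. mon (t - Suc (2*k)) (gam t (Suc k)))"
  proof -
    have "hvar 1 * SS t = (\<Sum>k\<le>Suc t. mon (Suc (t - 2*k)) (gam t k))"
      by (simp add: hvar1_SS gam_big)
    also have "\<dots> = mon (Suc t) 1 + (\<Sum>k\<le>t. mon (Suc (t - 2*Suc k)) (gam t (Suc k)))"
      by (subst sum.atMost_Suc_shift) simp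
    also have "(\<Sum>k\<le>t. mon (Suc (t - 2*Suc k)) (gam t (Suc k))) = (\<Sum>k\<le>t. mon (t - Suc (2*k)) (gam t (Suc k)))"
    proof (rule sum.cong[OF refl])
      fix k
      show "mon (Suc (t - 2*Suc k)) (gam t (Suc k)) = mon (t - Suc (2*k)) (gam t (Suc k))"
      proof (cases "2 * Suc k \<le> t")
        case True
        hence "Suc (t - 2*Suc k) = t - Suc (2*k)" by simp
        thus ?thesis by simp
      next
        case False thus ?thesis by (simp add: gam_big)
      qed
    qed
    finally show ?thesis .
  qed
  have B: "sconst (- 1/12) * pdiff 1 (SS t) = (\<Sum>k\<le>t. mon (t - Suc (2*k)) ((- 1/12) * of_nat (t - 2*k) * gam t k))"
    by (simp add: pdiff1_SS sum_distrib_left sconst_mon mult.assoc)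
  have "SS (Suc t) = mon (Suc t) 1 + (\<Sum>k\<le>t. mon (Suc t - 2 * Suc k) (gam (Suc t) (Suc k)))"
    unfolding SS_def by (subst sum.atMost_Suc_shift) simp
  also have "\<dots> = mon (Suc t) 1 + (\<Sum>k\<le>t. mon (t - Suc (2*k)) (gam t (Suc k)))
                 + (\<Sum>k\<le>t. mon (t - Suc (2*k)) ((- 1/12) * of_nat (t - 2*k) * gam t k))"
  proof -
    have eqk: "\<And>k. mon (Suc t - 2 * Suc k) (gam (Suc t) (Suc k)) = mon (t - Suc (2*k)) (gam t (Suc k)) + mon (t - Suc (2*k)) ((- 1/12) * of_nat (t - 2*k) * gam t k)"
    proof -
      fix k
      have "Suc t - 2 * Suc k = t - Suc (2*k)" by simp
      thus "mon (Suc t - 2 * Suc k) (gam (Suc t) (Suc k)) = mon (t - Suc (2*k)) (gam t (Suc k)) + mon (t - Suc (2*k)) ((- 1/12) * of_nat (t - 2*k) * gam t k)"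
        by (simp only: gam_rec mon_add)
    qed
    show ?thesis by (simp only: eqk sum.distrib add.assoc)
  qed
  finally have R: "SS (Suc t) = mon (Suc t) 1 + (\<Sum>k\<le>t. mon (t - Suc (2*k)) (gam t (Suc k)))
                 + (\<Sum>k\<le>t. mon (t - Suc (2*k)) ((- 1/12) * of_nat (t - 2*k) * gam t k))" .
  show ?thesis unfolding h A B R by (simp only: add.assoc)
qed

lemma SS_0: "SS 0 = 1" by (simp add: SS_def mon_def)

lemma V_eq: "(hsq (-1) ^^ t) 1 = SS t"
  by (induction t) (simp_all add: SS_0 hermite)



lemma mon_neg: "mon a (- x) = - mon a x"
  by (simp add: mon_def single_uminus)

lemma coef_aux1:
  fixes a b c d e :: rat
  shows "a * b * c * d / e = (b * c) * (a * d / e)"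
  by (simp add: algebra_simps)

lemma coef_aux2:
  fixes A Bn S C D E F R P :: rat
  assumes "A * S = D * E" "F \<noteq> 0" "R \<noteq> 0" "P \<noteq> 0"
  shows "A * Bn * (S * C) / (F * R * P) = Bn / R * (E * (D * C / (F * P)))"
proof -
  have "A * Bn * (S * C) / (F * R * P) = (A * S) * Bn * C / (F * R * P)" by (simp add: algebra_simps)
  also have "\<dots> = (D * E) * Bn * C / (F * R * P)" by (simp only: assms(1))
  also have "\<dots> = Bn / R * (E * (D * C / (F * P)))" using assms(2-4) by (simp add: field_simps)
  finally show ?thesis .
qed

lemma cfa: "r \<ge> 1 \<Longrightarrow> n < r \<Longrightarrow> fact (r - 1) * cm r (- int (Suc n)) = fact n * Scoef r n"
proof -
  assume a: "r \<ge> 1" "n < r"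
  have "cm r (- int (Suc n)) = (EE ^ n * fps_exp 1) $ (r - 1)"
    by (simp only: cm_neg[OF a(2)] PP_coeffA[OF a(2)])
  thus ?thesis using Scoef_eq[OF a(1), of n] by simp
qed

lemma cfb: "r \<ge> 1 \<Longrightarrow> fact (r - 1) * cm r 1 = - bernoulli (r + 1) / of_nat (r + 1)"
proof -
  assume "r \<ge> 1"
  hence "fact (r - 1) * cm r 1 = - bernoulli (Suc r) / of_nat (Suc r)" by (simp add: cm_one PP_coeffB')
  thus ?thesis by (simp only: Suc_eq_plus1)
qed

theorem mainTheorem5:
  fixes r t :: nat
  assumes "odd r" "r \<ge> 1" "odd t" "t \<ge> 1"
  shows "sconst (fact (r - 1)) * hsq (- int r) ((hsq (-1) ^^ t) 1) =
     (\<Sum>n\<in>{n. Scoef r n \<noteq> 0}. \<Sum>k\<le>t.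
        sconst (of_nat (t choose (2*k)) * fact n * Scoef r n * fact (2*k)
                / (fact k * (-24) ^ k))
        * hvar (n + 1) * hvar 1 ^ (t - 2*k))
   - (\<Sum>k\<le>t.
        sconst (of_nat (t choose (2*k+1)) * bernoulli (r + 1) * fact (2*k+1)
                / (fact k * of_nat (r + 1) * (-24) ^ k))
        * hvar 1 ^ (t - 2*k - 1))"
proof -
  have r1: "r \<ge> 1" by fact
  have pd: "\<forall>i\<ge>2. pdiff i (SS t) = 0" by (simp add: pdiff_SS)
  define P1 where "P1 = (\<Sum>n<r. sconst (fact n * Scoef r n) * (hvar (Suc n) * SS t))"
  define P2 where "P2 = (\<Sum>k\<le>t. mon (t - Suc (2*k)) (of_nat (t choose (2*k+1)) * bernoulli (r + 1) * fact (2*k+1)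
                / (fact k * of_nat (r + 1) * (-24) ^ k)))"
  have L: "sconst (fact (r - 1)) * hsq (- int r) ((hsq (-1) ^^ t) 1) = P1 - P2"
  proof -
    have "sconst (fact (r - 1)) * hsq (- int r) ((hsq (-1) ^^ t) 1)
       = (\<Sum>n<r. sconst (fact (r - 1)) * sconst (cm r (- int (Suc n))) * (hvar (Suc n) * SS t))
         + sconst (fact (r - 1)) * (sconst (cm r 1) * pdiff 1 (SS t))"
      unfolding V_eq hsq_DD[OF pd] by (simp add: distrib_left sum_distrib_left mult.assoc)
    also have "(\<Sum>n<r. sconst (fact (r - 1)) * sconst (cm r (- int (Suc n))) * (hvar (Suc n) * SS t)) = P1"
      unfolding P1_def
    proof (rule sum.cong[OF refl])
      fix n assume "n \<in> {..<r}"
      hence c: "fact (r - 1) * cm r (- int (Suc n)) = fact n * Scoef r n" using cfa[OF r1] by simp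
      show "sconst (fact (r - 1)) * sconst (cm r (- int (Suc n))) * (hvar (Suc n) * SS t) = sconst (fact n * Scoef r n) * (hvar (Suc n) * SS t)"
        by (simp only: sconst_mult[symmetric] c)
    qed
    also have "sconst (fact (r - 1)) * (sconst (cm r 1) * pdiff 1 (SS t)) = - P2"
    proof -
      have "sconst (fact (r - 1)) * (sconst (cm r 1) * pdiff 1 (SS t))
          = (\<Sum>k\<le>t. mon (t - Suc (2*k)) (fact (r - 1) * cm r 1 * (of_nat (t - 2*k) * gam t k)))"
        by (simp add: pdiff1_SS sum_distrib_left sconst_mon mult.assoc)
      also have "\<dots> = (\<Sum>k\<le>t. - mon (t - Suc (2*k)) (of_nat (t choose (2*k+1)) * bernoulli (r + 1) * fact (2*k+1)
                / (fact k * of_nat (r + 1) * (-24) ^ k)))"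
      proof (rule sum.cong[OF refl])
        fix k
        have fs: "(fact (2*k+1) :: rat) = of_nat (Suc (2*k)) * fact (2*k)" by (simp only: Suc_eq_plus1[symmetric] fact_Suc)
        have "of_nat (t choose (2*k+1)) * bernoulli (r + 1) * fact (2*k+1) / (fact k * of_nat (r + 1) * (-24) ^ k)
            = bernoulli (r + 1) / of_nat (r + 1) * (of_nat (t - 2*k) * (of_nat (t choose (2*k)) * fact (2*k) / (fact k * (-24) ^ k)))"
          unfolding fs by (rule coef_aux2) (use choose_shift_rat[of t "2*k"] in \<open>auto simp: Suc_eq_plus1\<close>)
        thus "mon (t - Suc (2*k)) (fact (r - 1) * cm r 1 * (of_nat (t - 2*k) * gam t k))
            = - mon (t - Suc (2*k)) (of_nat (t choose (2*k+1)) * bernoulli (r + 1) * fact (2*k+1)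
                / (fact k * of_nat (r + 1) * (-24) ^ k))"
          by (simp add: cfb[OF r1] gam_def mon_neg[symmetric])
      qed
      also have "\<dots> = - P2" by (simp add: P2_def sum_negf)
      finally show ?thesis .
    qed
    finally show ?thesis by simp
  qed
  have R1: "(\<Sum>n\<in>{n. Scoef r n \<noteq> 0}. \<Sum>k\<le>t.
        sconst (of_nat (t choose (2*k)) * fact n * Scoef r n * fact (2*k)
                / (fact k * (-24) ^ k))
        * hvar (n + 1) * hvar 1 ^ (t - 2*k)) = P1"
  proof -
    have inner: "(\<Sum>k\<le>t.
        sconst (of_nat (t choose (2*k)) * fact n * Scoef r n * fact (2*k)
                / (fact k * (-24) ^ k))
        * hvar (n + 1) * hvar 1 ^ (t - 2*k)) = sconst (fact n * Scoef r n) * (hvar (Suc n) * SS t)" for n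
    proof -
      have "(\<Sum>k\<le>t.
        sconst (of_nat (t choose (2*k)) * fact n * Scoef r n * fact (2*k)
                / (fact k * (-24) ^ k))
        * hvar (n + 1) * hvar 1 ^ (t - 2*k)) = (\<Sum>k\<le>t. sconst (fact n * Scoef r n) * (hvar (Suc n) * mon (t - 2*k) (gam t k)))"
      proof (rule sum.cong[OF refl])
        fix k
        have "sconst (of_nat (t choose (2*k)) * fact n * Scoef r n * fact (2*k) / (fact k * (-24) ^ k))
            = sconst (fact n * Scoef r n) * sconst (gam t k)"
          unfolding gam_def coef_aux1 by (rule sconst_mult)
        then show "sconst (of_nat (t choose (2*k)) * fact n * Scoef r n * fact (2*k) / (fact k * (-24) ^ k))
              * hvar (n + 1) * hvar 1 ^ (t - 2*k) = sconst (fact n * Scoef r n) * (hvar (Suc n) * mon (t - 2*k) (gam t k))"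
        proof -
          have m: "mon (t - 2*k) (gam t k) = sconst (gam t k) * mon (t - 2*k) 1" by (simp add: sconst_mon)
          show ?thesis unfolding hvar1_pow m \<open>sconst _ = _\<close> Suc_eq_plus1 by (simp only: mult_ac)
        qed
      qed
      also have "\<dots> = sconst (fact n * Scoef r n) * (hvar (Suc n) * SS t)"
        by (simp add: SS_def sum_distrib_left)
      finally show ?thesis .
    qed
    have "(\<Sum>n\<in>{n. Scoef r n \<noteq> 0}. sconst (fact n * Scoef r n) * (hvar (Suc n) * SS t)) = P1"
      unfolding P1_def
    proof (rule sum.mono_neutral_left)
      show "finite {..<r}" by simp
      show "{n. Scoef r n \<noteq> 0} \<subseteq> {..<r}"
        using Scoef_zero[OF _ r1] by (auto simp: not_less[symmetric])
      show "\<forall>i\<in>{..<r} - {n. Scoef r n \<noteq> 0}. sconst (fact i * Scoef r i) * (hvar (Suc i) * SS t) = 0"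
        by simp
    qed
    thus ?thesis by (simp only: inner)
  qed
  have R2: "(\<Sum>k\<le>t.
        sconst (of_nat (t choose (2*k+1)) * bernoulli (r + 1) * fact (2*k+1)
                / (fact k * of_nat (r + 1) * (-24) ^ k))
        * hvar 1 ^ (t - 2*k - 1)) = P2"
    unfolding P2_def
  proof (rule sum.cong[OF refl])
    fix k
    have "t - 2*k - 1 = t - Suc (2*k)" by simp
    thus "sconst (of_nat (t choose (2*k+1)) * bernoulli (r + 1) * fact (2*k+1)
                / (fact k * of_nat (r + 1) * (-24) ^ k)) * hvar 1 ^ (t - 2*k - 1)
        = mon (t - Suc (2*k)) (of_nat (t choose (2*k+1)) * bernoulli (r + 1) * fact (2*k+1)
                / (fact k * of_nat (r + 1) * (-24) ^ k))"
      by (simp only: hvar1_pow sconst_mon mult_1_right)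
  qed
  show ?thesis unfolding L R1 R2 ..
qed


end
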